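(* Let $\alpha,\beta>0$ and let $\mathrm{sgn}$ denote the sign function. (i) If $\tau_0=\tau_1+\tau_2$ and $k_0=k_1+k_2\neq0$ (with $\tau_i\in\mathbb{R}$, $k_i\in\mathbb{Z}$), then $$\max\{|\tau_0-\alpha k_0^2|,\ |\tau_1-\alpha k_1^2|,\ ||\tau_2|-\beta|k_2||\}\gtrsim|\alpha|\,|k_2|\,\Big|k_0+k_1-\tfrac{\beta}{\alpha}S_1\Big|,\quad S_1=\mathrm{sgn}(\tau_2k_2).$$ (ii) If $\tau_0=\tau_1-\tau_2$ and $k_0=k_1-k_2\neq0$, then $$\max\{||\tau_0|-\beta|k_0||,\ |\tau_1-\alpha k_1^2|,\ |\tau_2-\alpha k_2^2|\}\gtrsim|\alpha|\,|k_0|\,\Big|k_1+k_2-\tfrac{\beta}{\alpha}S_2\Big|,\quad S_2=\mathrm{sgn}(\tau_0k_0).$$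
   Context: $A\gtrsim B$ means $A\ge cB$ for an absolute constant $c>0$. *)

theory Defs
  imports Complex_Main
begin

end

theory Submission
  imports Defs
begin

theorem lemma4p4:
  "\<exists>c>0. \<forall>(\<alpha>::real) (\<beta>::real). \<alpha> > 0 \<longrightarrow> \<beta> > 0 \<longrightarrow>
     (\<forall>(\<tau>0::real) \<tau>1 \<tau>2 (k0::int) k1 k2.
        \<tau>0 = \<tau>1 + \<tau>2 \<longrightarrow> k0 = k1 + k2 \<longrightarrow> k0 \<noteq> 0 \<longrightarrow>
        Max {\<bar>\<tau>0 - \<alpha> * (of_int k0)^2\<bar>, \<bar>\<tau>1 - \<alpha> * (of_int k1)^2\<bar>,
             \<bar>\<bar>\<tau>2\<bar> - \<beta> * \<bar>of_int k2\<bar>\<bar>}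
        \<ge> c * (\<bar>\<alpha>\<bar> * \<bar>of_int k2\<bar> *
               \<bar>of_int k0 + of_int k1 - (\<beta> / \<alpha>) * sgn (\<tau>2 * of_int k2)\<bar>)) \<and>
     (\<forall>(\<tau>0::real) \<tau>1 \<tau>2 (k0::int) k1 k2.
        \<tau>0 = \<tau>1 - \<tau>2 \<longrightarrow> k0 = k1 - k2 \<longrightarrow> k0 \<noteq> 0 \<longrightarrow>
        Max {\<bar>\<bar>\<tau>0\<bar> - \<beta> * \<bar>of_int k0\<bar>\<bar>, \<bar>\<tau>1 - \<alpha> * (of_int k1)^2\<bar>,
             \<bar>\<tau>2 - \<alpha> * (of_int k2)^2\<bar>}
        \<ge> c * (\<bar>\<alpha>\<bar> * \<bar>of_int k0\<bar> *
               \<bar>of_int k1 + of_int k2 - (\<beta> / \<alpha>) * sgn (\<tau>0 * of_int k0)\<bar>))"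
proof -
  have max3: "Max {a, b, c} = max a (max b c)" for a b c :: real by simp
  have key: "\<bar>t - sgn (t * of_int k) * b * of_int k\<bar> \<le> \<bar>\<bar>t\<bar> - b * \<bar>of_int k\<bar>\<bar>"
    if "b > 0" for t b :: real and k :: int
  proof -
    consider "t > 0" "k > 0" | "t > 0" "k < 0" | "t < 0" "k > 0" | "t < 0" "k < 0" | "t = 0" | "k = 0"
      by linarith
    then show ?thesis
    proof cases
      case 1 then show ?thesis by (simp add: sgn_mult)
    next
      case 2 then show ?thesis by (simp add: sgn_mult abs_minus_commute)
    next
      case 3 then show ?thesis by (simp add: sgn_mult)
    next
      case 4 then show ?thesis by (simp add: sgn_mult)
    qed auto
  qed
  have fin: "max \<bar>B\<bar> (max \<bar>A\<bar> C) \<ge> 1/3 * R \<and> max C (max \<bar>B\<bar> \<bar>A\<bar>) \<ge> 1/3 * R"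
    if "R = \<bar>A - B - D\<bar>" "\<bar>D\<bar> \<le> C" for A B C D R :: real
    using that by (auto simp: abs_if max_def split: if_splits)
  have part1: "Max {\<bar>\<tau>0 - \<alpha> * (of_int k0)^2\<bar>, \<bar>\<tau>1 - \<alpha> * (of_int k1)^2\<bar>,
             \<bar>\<bar>\<tau>2\<bar> - \<beta> * \<bar>of_int k2\<bar>\<bar>}
        \<ge> 1/3 * (\<bar>\<alpha>\<bar> * \<bar>of_int k2\<bar> *
               \<bar>of_int k0 + of_int k1 - (\<beta> / \<alpha>) * sgn (\<tau>2 * of_int k2)\<bar>)"
    if a: "\<alpha> > 0" and b: "\<beta> > 0" and h: "\<tau>0 = \<tau>1 + \<tau>2" "k0 = k1 + k2" "k0 \<noteq> 0"
    for \<alpha> \<beta> \<tau>0 \<tau>1 \<tau>2 :: real and k0 k1 k2 :: int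
  proof -
    let ?S = "sgn (\<tau>2 * of_int k2)"
    have K: "\<bar>-(\<tau>2 - ?S * \<beta> * of_int k2)\<bar> \<le> \<bar>\<bar>\<tau>2\<bar> - \<beta> * \<bar>of_int k2\<bar>\<bar>"
      using key[OF b, of \<tau>2 k2] by simp
    have id: "\<alpha> * of_int k2 * (of_int k0 + of_int k1 - (\<beta> / \<alpha>) * ?S)
       = (\<tau>1 - \<alpha> * (of_int k1)^2) - (\<tau>0 - \<alpha> * (of_int k0)^2) - (-(\<tau>2 - ?S * \<beta> * of_int k2))"
      using a unfolding h(1) h(2) by (simp add: field_simps power2_eq_square)
    have R: "\<bar>\<alpha>\<bar> * \<bar>of_int k2\<bar> * \<bar>of_int k0 + of_int k1 - (\<beta> / \<alpha>) * ?S\<bar>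
       = \<bar>(\<tau>1 - \<alpha> * (of_int k1)^2) - (\<tau>0 - \<alpha> * (of_int k0)^2) - (-(\<tau>2 - ?S * \<beta> * of_int k2))\<bar>"
      by (metis id abs_mult)
    show ?thesis
      unfolding max3 by (rule fin[OF R K, THEN conjunct1])
  qed
  have part2: "Max {\<bar>\<bar>\<tau>0\<bar> - \<beta> * \<bar>of_int k0\<bar>\<bar>, \<bar>\<tau>1 - \<alpha> * (of_int k1)^2\<bar>,
             \<bar>\<tau>2 - \<alpha> * (of_int k2)^2\<bar>}
        \<ge> 1/3 * (\<bar>\<alpha>\<bar> * \<bar>of_int k0\<bar> *
               \<bar>of_int k1 + of_int k2 - (\<beta> / \<alpha>) * sgn (\<tau>0 * of_int k0)\<bar>)"
    if a: "\<alpha> > 0" and b: "\<beta> > 0" and h: "\<tau>0 = \<tau>1 - \<tau>2" "k0 = k1 - k2" "k0 \<noteq> 0"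
    for \<alpha> \<beta> \<tau>0 \<tau>1 \<tau>2 :: real and k0 k1 k2 :: int
  proof -
    let ?S = "sgn (\<tau>0 * of_int k0)"
    have K: "\<bar>-(\<tau>0 - ?S * \<beta> * of_int k0)\<bar> \<le> \<bar>\<bar>\<tau>0\<bar> - \<beta> * \<bar>of_int k0\<bar>\<bar>"
      using key[OF b, of \<tau>0 k0] by simp
    have id: "\<alpha> * of_int k0 * (of_int k1 + of_int k2 - (\<beta> / \<alpha>) * ?S)
       = (\<tau>2 - \<alpha> * (of_int k2)^2) - (\<tau>1 - \<alpha> * (of_int k1)^2) - (-(\<tau>0 - ?S * \<beta> * of_int k0))"
      using a unfolding h(1) h(2) by (simp add: field_simps power2_eq_square)
    have R: "\<bar>\<alpha>\<bar> * \<bar>of_int k0\<bar> * \<bar>of_int k1 + of_int k2 - (\<beta> / \<alpha>) * ?S\<bar>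
       = \<bar>(\<tau>2 - \<alpha> * (of_int k2)^2) - (\<tau>1 - \<alpha> * (of_int k1)^2) - (-(\<tau>0 - ?S * \<beta> * of_int k0))\<bar>"
      by (metis id abs_mult)
    show ?thesis
      unfolding max3 by (rule fin[OF R K, THEN conjunct2])
  qed
  show ?thesis
    apply (rule exI[of _ "1/3"])
    apply (intro conjI allI impI)
      apply simp
     apply (rule part1; assumption)
    apply (rule part2; assumption)
    done
qed

end
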